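(* Let $V_1$ and $V_2$ be real vector spaces of dimensions $d_1$ and $d_2$, let $U\subseteq V_1$ and $V\subseteq V_2$ be relatively compact open subsets, let $R_1,R_2>0$ and $0<\varepsilon\leq R_1^{d_1}R_2^{d_2}$, and define $$U\times_{R_1,R_2,\varepsilon}V:=\{(\alpha u,\beta v)\,;\,u\in U,\ v\in V,\ \alpha,\beta\in\mathbb{R},\ |\alpha|\leq R_1,\ |\beta|\leq R_2,\ |\alpha^{d_1}\beta^{d_2}|\leq\varepsilon\}.$$ If $U$ and $V$ are balanced, then $$U\times_{R_1,R_2,\varepsilon}V=\{(\alpha u,\beta v)\,;\,u\in U,\ v\in V,\ \alpha,\beta\in\mathbb{R},\ |\alpha|\leq R_1,\ |\beta|\leq R_2,\ |\alpha^{d_1}\beta^{d_2}|=\varepsilon\}.$$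
   Context: A subset $U$ of a real vector space is balanced if $\alpha U\subseteq U$ for all real $\alpha$ with $|\alpha|\leq 1$. *)

theory Defs
  imports "HOL-Analysis.Analysis"
begin

definition balanced :: "'a::real_vector set \<Rightarrow> bool" where
  "balanced U \<longleftrightarrow> (\<forall>\<alpha>::real. \<bar>\<alpha>\<bar> \<le> 1 \<longrightarrow> (\<lambda>u. \<alpha> *\<^sub>R u) ` U \<subseteq> U)"

definition relatively_compact :: "'a::topological_space set \<Rightarrow> bool" where
  "relatively_compact U \<longleftrightarrow> compact (closure U)"

end

theory Submission
  imports Defs
begin

lemma scale_up:
  fixes a b R1 R2 e :: real and d1 d2 :: nat
  assumes "\<bar>a\<bar> \<le> R1" "\<bar>b\<bar> \<le> R2" "\<bar>a ^ d1 * b ^ d2\<bar> \<le> e" "e \<le> R1 ^ d1 * R2 ^ d2"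
  shows "\<exists>a' b'. \<bar>a\<bar> \<le> a' \<and> a' \<le> R1 \<and> \<bar>b\<bar> \<le> b' \<and> b' \<le> R2 \<and> \<bar>a' ^ d1 * b' ^ d2\<bar> = e"
proof -
  define f where "f = (\<lambda>t::real. \<bar>((1-t)*\<bar>a\<bar> + t*R1) ^ d1 * ((1-t)*\<bar>b\<bar> + t*R2) ^ d2\<bar>)"
  have c: "continuous_on {0..1} f" unfolding f_def by (intro continuous_intros)
  have f0: "f 0 \<le> e" using assms(3) by (simp add: f_def abs_mult power_abs)
  have f1: "e \<le> f 1" using assms(4) by (simp add: f_def)
  obtain t where t: "0 \<le> t" "t \<le> 1" "f t = e" using IVT'[of f 0 e 1, OF f0 f1 _ c] by auto
  have h1: "\<bar>a\<bar> \<le> (1-t)*\<bar>a\<bar> + t*R1" "(1-t)*\<bar>a\<bar> + t*R1 \<le> R1"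
    using t assms(1) mult_left_mono[of "\<bar>a\<bar>" R1 t] mult_left_mono[of "\<bar>a\<bar>" R1 "1-t"]
    by (auto simp: algebra_simps)
  have h2: "\<bar>b\<bar> \<le> (1-t)*\<bar>b\<bar> + t*R2" "(1-t)*\<bar>b\<bar> + t*R2 \<le> R2"
    using t assms(2) mult_left_mono[of "\<bar>b\<bar>" R2 t] mult_left_mono[of "\<bar>b\<bar>" R2 "1-t"]
    by (auto simp: algebra_simps)
  show ?thesis using h1 h2 t(3) unfolding f_def by blast
qed

theorem mainTheorem5:
  fixes U :: "'a::real_normed_vector set" and V :: "'b::real_normed_vector set"
    and d1 d2 :: nat and R1 R2 \<epsilon> :: real
  assumes fin1: "\<exists>B::'a set. finite B \<and> span B = UNIV"
    and fin2: "\<exists>B::'b set. finite B \<and> span B = UNIV"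
    and d1: "d1 = dim (UNIV :: 'a set)"
    and d2: "d2 = dim (UNIV :: 'b set)"
    and "open U" and "relatively_compact U"
    and "open V" and "relatively_compact V"
    and "R1 > 0" and "R2 > 0"
    and "0 < \<epsilon>" and "\<epsilon> \<le> R1 ^ d1 * R2 ^ d2"
    and "balanced U" and "balanced V"
  shows "{(\<alpha> *\<^sub>R u, \<beta> *\<^sub>R v) | u v \<alpha> \<beta>. u \<in> U \<and> v \<in> V \<and>
            \<bar>\<alpha>\<bar> \<le> R1 \<and> \<bar>\<beta>\<bar> \<le> R2 \<and> \<bar>\<alpha> ^ d1 * \<beta> ^ d2\<bar> \<le> \<epsilon>}
       = {(\<alpha> *\<^sub>R u, \<beta> *\<^sub>R v) | u v \<alpha> \<beta>. u \<in> U \<and> v \<in> V \<and>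
            \<bar>\<alpha>\<bar> \<le> R1 \<and> \<bar>\<beta>\<bar> \<le> R2 \<and> \<bar>\<alpha> ^ d1 * \<beta> ^ d2\<bar> = \<epsilon>}"
proof -
  let ?L = "{(\<alpha> *\<^sub>R u, \<beta> *\<^sub>R v) | u v \<alpha> \<beta>. u \<in> U \<and> v \<in> V \<and>
            \<bar>\<alpha>\<bar> \<le> R1 \<and> \<bar>\<beta>\<bar> \<le> R2 \<and> \<bar>\<alpha> ^ d1 * \<beta> ^ d2\<bar> \<le> \<epsilon>}"
  let ?R = "{(\<alpha> *\<^sub>R u, \<beta> *\<^sub>R v) | u v \<alpha> \<beta>. u \<in> U \<and> v \<in> V \<and>
            \<bar>\<alpha>\<bar> \<le> R1 \<and> \<bar>\<beta>\<bar> \<le> R2 \<and> \<bar>\<alpha> ^ d1 * \<beta> ^ d2\<bar> = \<epsilon>}"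
  have "?R \<subseteq> ?L" by force
  moreover have "?L \<subseteq> ?R"
  proof
    fix p assume "p \<in> ?L"
    then obtain u v a b where p: "p = (a *\<^sub>R u, b *\<^sub>R v)" and uv: "u \<in> U" "v \<in> V"
      and ab: "\<bar>a\<bar> \<le> R1" "\<bar>b\<bar> \<le> R2" "\<bar>a ^ d1 * b ^ d2\<bar> \<le> \<epsilon>" by blast
    obtain a' b' where ab': "\<bar>a\<bar> \<le> a'" "a' \<le> R1" "\<bar>b\<bar> \<le> b'" "b' \<le> R2"
      "\<bar>a' ^ d1 * b' ^ d2\<bar> = \<epsilon>"
      using scale_up[OF ab assms(12)] by blast
    have qa: "\<bar>a / a'\<bar> \<le> 1" using ab'(1)
      by (cases "a' = 0") (auto simp: abs_divide divide_le_eq_1)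
    have qb: "\<bar>b / b'\<bar> \<le> 1" using ab'(3)
      by (cases "b' = 0") (auto simp: abs_divide divide_le_eq_1)
    have u': "(a / a') *\<^sub>R u \<in> U" using assms(13) qa uv(1) unfolding balanced_def by blast
    have v': "(b / b') *\<^sub>R v \<in> V" using assms(14) qb uv(2) unfolding balanced_def by blast
    have ea: "a' *\<^sub>R ((a / a') *\<^sub>R u) = a *\<^sub>R u" using ab'(1)
      by (cases "a' = 0") auto
    have eb: "b' *\<^sub>R ((b / b') *\<^sub>R v) = b *\<^sub>R v" using ab'(3)
      by (cases "b' = 0") auto
    show "p \<in> ?R" unfolding p
      using u' v' ea eb ab' by (smt (verit) mem_Collect_eq)
  qed
  ultimately show ?thesis by blast
qed

end
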